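(* For all positive integers $n$, $\det A(n)=1$.
   Context: For a positive integer $n$, the $n\times n$ matrix $A(n)=(A_{n,i,j})_{0\le i,j\le n-1}$ (entries rational functions in indeterminates $x,y$) is defined by $A_{n,i,j}=\frac{(1+x)(1+y)}{xy}$ if $i=j<n-1$; $A_{n,i,j}=-\frac1{xy}$ if $i=j-1<n-1$; $A_{n,n-1,n-1}=\frac{xy-(n-1)(x+y)}{xy}$; for $i=n-1$ and $j<n-1$, $$A_{n,n-1,j}=\frac{(-1)^{n+j}}{xy}\sum_{l=j}^{n}\left(\binom lj\binom{n+j-1-l}{j}x^{l-j}y^{n-1-l}+\binom lj\binom{n+j-l}{j}x^{l-j}y^{n-l}\right);$$ and $A_{n,i,j}=0$ otherwise. Binomial coefficients $\binom ab$ are $0$ if $b<0$ or $a<b$. *)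

theory Defs
  imports "Jordan_Normal_Form.Determinant"
begin

definition ibinom :: "int \<Rightarrow> nat \<Rightarrow> nat" where
  "ibinom a b = (if a < int b then 0 else nat a choose b)"

text \<open>Entry (i,j) of A(n), 0-based indices, evaluated at x, y in a field.\<close>
definition A_entry :: "nat \<Rightarrow> 'a::field \<Rightarrow> 'a \<Rightarrow> nat \<Rightarrow> nat \<Rightarrow> 'a" where
  "A_entry n x y i j =
    (if i = j \<and> i < n - 1 then (1 + x) * (1 + y) / (x * y)
     else if i + 1 = j \<and> i < n - 1 then - 1 / (x * y)
     else if i = n - 1 \<and> j = n - 1 then (x * y - of_nat (n - 1) * (x + y)) / (x * y)
     else if i = n - 1 \<and> j < n - 1 then
       (-1) ^ (n + j) / (x * y) *
       (\<Sum>l = j..n.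
          of_nat (ibinom (int l) j * ibinom (int n + int j - 1 - int l) j) * x ^ (l - j) * y ^ (n - 1 - l)
        + of_nat (ibinom (int l) j * ibinom (int n + int j - int l) j) * x ^ (l - j) * y ^ (n - l))
     else 0)"

definition A_mat :: "nat \<Rightarrow> 'a::field \<Rightarrow> 'a \<Rightarrow> 'a mat" where
  "A_mat n x y = mat n n (\<lambda>(i, j). A_entry n x y i j)"

end

theory Submission
  imports Defs "HOL-Computational_Algebra.Formal_Power_Series"
begin


definition Ax :: "'a::field \<Rightarrow> nat \<Rightarrow> 'a fps" where
  "Ax z j = Abs_fps (\<lambda>k. of_nat ((k+j) choose j) * z^k)"

lemma Ax_nth[simp]: "fps_nth (Ax z j) k = of_nat ((k+j) choose j) * z^k"
  by (simp add: Ax_def)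

lemma Ax_0: "(1 - fps_const z * fps_X) * Ax z 0 = 1"
proof (rule fps_ext)
  fix k show "fps_nth ((1 - fps_const z * fps_X) * Ax z 0) k = fps_nth (1::'a fps) k"
    by (cases k) (simp_all add: algebra_simps mult.assoc)
qed

lemma Ax_Suc: "(1 - fps_const z * fps_X) * Ax z (Suc j) = Ax z j"
proof (rule fps_ext)
  fix k show "fps_nth ((1 - fps_const z * fps_X) * Ax z (Suc j)) k = fps_nth (Ax z j) k"
  proof (cases k)
    case 0 then show ?thesis by simp
  next
    case (Suc k')
    have "fps_nth ((1 - fps_const z * fps_X) * Ax z (Suc j)) k = fps_nth (Ax z (Suc j)) k - z * fps_nth (Ax z (Suc j)) k'"
      using Suc by (simp add: algebra_simps mult.assoc)
    also have "\<dots> = (of_nat ((Suc k' + Suc j) choose Suc j) - of_nat ((k' + Suc j) choose Suc j)) * z^k"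
      using Suc by (simp add: algebra_simps)
    also have "(Suc k' + Suc j) choose Suc j = ((k' + Suc j) choose j) + (k' + Suc j choose Suc j)"
      by simp
    finally show ?thesis using Suc by simp
  qed
qed

lemma D_eq:
  fixes x y :: "'a::field"
  shows "(1 - fps_const (-1) * fps_X) * (1 - fps_const (-(x*y)) * fps_X)
    = (1 - fps_const x * fps_X) * (1 - fps_const y * fps_X) + fps_const ((1+x)*(1+y)) * fps_X"
proof -
  have e0: "fps_const ((1+x)*(1+y)) = fps_const 1 + fps_const x + fps_const y + fps_const x * fps_const y"
    by (simp only: fps_const_add fps_const_mult) (simp add: algebra_simps)
  have e: "fps_const ((1+x)*(1+y)) = 1 + fps_const x + fps_const y + fps_const x * fps_const y"
    using e0 by simp
  have e2: "fps_const (-(x*y)) = - (fps_const x * fps_const y)" by simp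
  have e3: "fps_const (-1) = - (1::'a fps)" by (metis fps_const_1_eq_1 fps_const_neg)
  show ?thesis unfolding e e2 e3 by (simp del: fps_const_mult fps_const_add fps_const_neg fps_const_sub add: algebra_simps)
qed

definition Cf :: "'a::field \<Rightarrow> 'a \<Rightarrow> nat \<Rightarrow> 'a fps" where
  "Cf x y j = Ax x j * Ax y j"

definition Hf :: "'a::field \<Rightarrow> 'a \<Rightarrow> nat \<Rightarrow> 'a fps" where
  "Hf x y N = (\<Sum>j\<le>N. fps_const ((-((1+x)*(1+y)))^j) * fps_X^j * Cf x y j)"

lemma q_C0: "((1 - fps_const x * fps_X) * (1 - fps_const y * fps_X)) * Cf x y 0 = 1"
proof -
  have "((1 - fps_const x * fps_X) * (1 - fps_const y * fps_X)) * Cf x y 0 =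
     ((1 - fps_const x * fps_X) * Ax x 0) * ((1 - fps_const y * fps_X) * Ax y 0)"
    unfolding Cf_def by (simp only: ac_simps)
  then show ?thesis by (simp add: Ax_0)
qed

lemma q_CS: "((1 - fps_const x * fps_X) * (1 - fps_const y * fps_X)) * Cf x y (Suc j) = Cf x y j"
proof -
  have "((1 - fps_const x * fps_X) * (1 - fps_const y * fps_X)) * Cf x y (Suc j) =
     ((1 - fps_const x * fps_X) * Ax x (Suc j)) * ((1 - fps_const y * fps_X) * Ax y (Suc j))"
    unfolding Cf_def by (simp only: ac_simps)
  then show ?thesis by (simp add: Ax_Suc Cf_def)
qed

lemma DH:
  fixes x y :: "'a::field"
  defines "D \<equiv> (1 - fps_const (-1) * fps_X) * (1 - fps_const (-(x*y)) * fps_X)"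
  shows "D * Hf x y N = 1 - fps_const ((-((1+x)*(1+y)))^(Suc N)) * fps_X^(Suc N) * Cf x y N"
proof -
  let ?q = "(1 - fps_const x * fps_X) * (1 - fps_const y * fps_X)"
  let ?u = "(1+x)*(1+y)"
  define U where "U = fps_const ?u"
  have DU: "D = ?q + U * fps_X" unfolding D_def D_eq U_def by simp
  have cneg: "fps_const ((-?u)^k) = (-U)^k" for k
    unfolding U_def by simp
  show ?thesis
  proof (induction N)
    case 0
    have "D * Hf x y 0 = ?q * Cf x y 0 + U * fps_X * Cf x y 0"
      unfolding DU Hf_def by (simp add: distrib_right)
    then show ?case unfolding cneg by (simp add: q_C0)
  next
    case (Suc N)
    have "D * Hf x y (Suc N) = D * Hf x y N + (-U)^(Suc N) * fps_X^(Suc N) * (D * Cf x y (Suc N))"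
      unfolding Hf_def cneg by (simp add: algebra_simps)
    also have "D * Cf x y (Suc N) = Cf x y N + U * fps_X * Cf x y (Suc N)"
      unfolding DU by (simp add: distrib_right q_CS)
    finally show ?case using Suc.IH unfolding cneg
      by (simp add: algebra_simps)
  qed
qed

definition Rf :: "'a::field \<Rightarrow> 'a \<Rightarrow> 'a fps" where
  "Rf x y = Ax (-1) 0 * Ax (-(x*y)) 0"

lemma DR: "((1 - fps_const (-1) * fps_X) * (1 - fps_const (-(x*y)) * fps_X)) * Rf x y = 1"
proof -
  have "((1 - fps_const (-1) * fps_X) * (1 - fps_const (-(x*y)) * fps_X)) * Rf x y
    = ((1 - fps_const (-1) * fps_X) * Ax (-1) 0) * ((1 - fps_const (-(x*y)) * fps_X) * Ax (-(x*y)) 0)"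
    unfolding Rf_def by (simp only: ac_simps)
  then show ?thesis by (simp only: Ax_0) simp
qed

lemma H_nth_le:
  fixes x y :: "'a::field"
  assumes "k \<le> N"
  shows "fps_nth (Hf x y N) k = fps_nth (Rf x y) k"
proof -
  let ?D = "(1 - fps_const (-1) * fps_X) * (1 - fps_const (-(x*y)) * fps_X)"
  let ?c = "fps_const ((-((1+x)*(1+y)))^(Suc N))"
  have "Hf x y N = (Rf x y * ?D) * Hf x y N" using DR[of x y] by (simp add: mult.commute)
  also have "\<dots> = Rf x y * (?D * Hf x y N)" by (simp only: mult.assoc)
  also have "\<dots> = Rf x y - fps_X^(Suc N) * (?c * Rf x y * Cf x y N)"
    unfolding DH by (simp add: algebra_simps)
  finally have e: "Hf x y N = Rf x y - fps_X^(Suc N) * (?c * Rf x y * Cf x y N)" .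
  have z: "fps_nth (fps_X^(Suc N) * (?c * Rf x y * Cf x y N)) k = 0"
    by (simp only: fps_X_power_mult_nth) (use assms in simp)
  show ?thesis by (subst e) (simp only: fps_sub_nth z, simp)
qed

lemma H_nth_self:
  "fps_nth (Hf x y k) k = (\<Sum>j\<le>k. (-((1+x)*(1+y)))^j * fps_nth (Cf x y j) (k-j))"
  unfolding Hf_def fps_sum_nth
  by (intro sum.cong refl) (simp add: fps_X_power_mult_nth mult.assoc)

lemma F_eq:
  "(\<Sum>j\<le>k. (-((1+x)*(1+y)))^j * fps_nth (Cf x y j) (k-j)) = fps_nth (Rf x y) (k::nat)"
  using H_nth_le[of k k x y] H_nth_self[of x y k] by simp

lemma R_rec: "fps_nth (Rf x y) (Suc m) + fps_nth (Rf x y) m = (-(x*y))^(Suc m)"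
proof -
  have "(1 - fps_const (-1) * fps_X) * Rf x y = Ax (-(x*y)) 0"
    unfolding Rf_def by (simp only: mult.assoc[symmetric] Ax_0) simp
  then have "fps_nth ((1 - fps_const (-1) * fps_X) * Rf x y) (Suc m) = (-(x*y))^(Suc m)" by simp
  then show ?thesis by (simp add: algebra_simps)
qed

lemma Cf_nth_sum:
  fixes x y :: "'a::field"
  assumes "j \<le> k"
  shows "fps_nth (Cf x y j) (k-j) =
    (\<Sum>l=j..k. of_nat ((l choose j) * ((k+j-l) choose j)) * x^(l-j) * y^(k-l))"
proof -
  have "fps_nth (Cf x y j) (k-j) = (\<Sum>i=0..k-j. of_nat ((i+j) choose j) * x^i * (of_nat ((k-j-i+j) choose j) * y^(k-j-i)))"
    unfolding Cf_def fps_mult_nth by simp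
  also have "\<dots> = (\<Sum>i=0..k-j. of_nat (((i+j) choose j) * ((k+j-(i+j)) choose j)) * x^(i+j-j) * y^(k-(i+j)))"
  proof (intro sum.cong refl)
    fix i assume "i \<in> {0..k-j}"
    then have h: "k-j-i+j = k+j-(i+j)" "k-(i+j) = k-j-i" "i+j-j = i" using assms by auto
    show "of_nat ((i+j) choose j) * x^i * (of_nat ((k-j-i+j) choose j) * y^(k-j-i)) =
      (of_nat (((i+j) choose j) * ((k+j-(i+j)) choose j)) * x^(i+j-j) * y^(k-(i+j)) :: 'a)"
      unfolding h by (simp add: algebra_simps)
  qed
  also have "\<dots> = (\<Sum>l=0+j..k-j+j. of_nat ((l choose j) * ((k+j-l) choose j)) * x^(l-j) * y^(k-l))"
    by (rule sum.shift_bounds_cl_nat_ivl[symmetric])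
  finally show ?thesis using assms by simp
qed

lemma Cf_nth0: "fps_nth (Cf x y j) 0 = 1"
  unfolding Cf_def by simp

lemma Cf_nth1: "fps_nth (Cf x y j) (Suc 0) = of_nat (Suc j) * (x + y)"
  unfolding Cf_def by (simp add: algebra_simps)

lemma ibinom_nat: "ibinom (int N) b = N choose b"
  unfolding ibinom_def by (auto simp: binomial_eq_0)

definition Ssum :: "nat \<Rightarrow> 'a::field \<Rightarrow> 'a \<Rightarrow> nat \<Rightarrow> 'a" where
  "Ssum n x y j = (\<Sum>l = j..n.
          of_nat (ibinom (int l) j * ibinom (int n + int j - 1 - int l) j) * x ^ (l - j) * y ^ (n - 1 - l)
        + of_nat (ibinom (int l) j * ibinom (int n + int j - int l) j) * x ^ (l - j) * y ^ (n - l))"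

lemma Ssum_eq:
  fixes x y :: "'a::field"
  assumes "j \<le> m"
  shows "Ssum (Suc m) x y j = fps_nth (Cf x y j) (m-j) + fps_nth (Cf x y j) (Suc m-j)"
proof -
  have p2: "(\<Sum>l = j..Suc m. of_nat (ibinom (int l) j * ibinom (int (Suc m) + int j - int l) j) * x ^ (l - j) * y ^ (Suc m - l))
     = fps_nth (Cf x y j) (Suc m-j)"
    unfolding Cf_nth_sum[of j "Suc m", OF le_SucI[OF assms]]
  proof (intro sum.cong refl)
    fix l assume "l \<in> {j..Suc m}"
    then have "int (Suc m) + int j - int l = int (Suc m + j - l)" by auto
    then show "of_nat (ibinom (int l) j * ibinom (int (Suc m) + int j - int l) j) * x ^ (l - j) * y ^ (Suc m - l)
      = (of_nat ((l choose j) * ((Suc m+j-l) choose j)) * x^(l-j) * y^(Suc m-l) :: 'a)"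
      by (simp only: ibinom_nat)
  qed
  have p1: "(\<Sum>l = j..Suc m. of_nat (ibinom (int l) j * ibinom (int (Suc m) + int j - 1 - int l) j) * x ^ (l - j) * y ^ (Suc m - 1 - l))
     = fps_nth (Cf x y j) (m-j)"
  proof -
    have last: "ibinom (int (Suc m) + int j - 1 - int (Suc m)) j = 0"
      unfolding ibinom_def by simp
    have "(\<Sum>l = j..Suc m. of_nat (ibinom (int l) j * ibinom (int (Suc m) + int j - 1 - int l) j) * x ^ (l - j) * y ^ (Suc m - 1 - l))
      = (\<Sum>l = j..m. of_nat (ibinom (int l) j * ibinom (int (Suc m) + int j - 1 - int l) j) * x ^ (l - j) * y ^ (Suc m - 1 - l))"
      using assms last by (simp del: of_nat_mult)
    also have "\<dots> = (\<Sum>l=j..m. of_nat ((l choose j) * ((m+j-l) choose j)) * x^(l-j) * y^(m-l))"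
    proof (intro sum.cong refl)
      fix l assume "l \<in> {j..m}"
      then have "int (Suc m) + int j - 1 - int l = int (m + j - l)" by auto
      then show "of_nat (ibinom (int l) j * ibinom (int (Suc m) + int j - 1 - int l) j) * x ^ (l - j) * y ^ (Suc m - 1 - l)
        = (of_nat ((l choose j) * ((m+j-l) choose j)) * x^(l-j) * y^(m-l) :: 'a)"
        by (simp only: ibinom_nat) simp
    qed
    finally show ?thesis unfolding Cf_nth_sum[OF assms] .
  qed
  show ?thesis unfolding Ssum_def sum.distrib p1 p2 ..
qed



definition Bm :: "nat \<Rightarrow> 'a::comm_ring_1 \<Rightarrow> 'a \<Rightarrow> (nat \<Rightarrow> 'a) \<Rightarrow> 'a mat" where
  "Bm m d e a = mat m m (\<lambda>(i,j). if i + 1 < m then (if j = i then d else if j = i+1 then e else 0) else a j)"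

lemma det_Bm: "det (Bm (Suc n) d e a) = (\<Sum>j\<le>n. a j * (-1)^(n+j) * d^j * e^(n-j))"
proof (induction n arbitrary: a)
  case 0
  have "det (Bm (Suc 0) d e a) = Bm (Suc 0) d e a $$ (0,0)"
    by (rule det_single) (simp add: Bm_def)
  then show ?case by (simp add: Bm_def)
next
  case (Suc n)
  define B where "B = Bm (Suc (Suc n)) d e a"
  have Bc: "B \<in> carrier_mat (Suc (Suc n)) (Suc (Suc n))" unfolding B_def Bm_def by simp
  have lap: "det B = (\<Sum>i<Suc (Suc n). B $$ (i,0) * cofactor B i 0)"
    by (rule laplace_expansion_column[OF Bc]) simp
  have z: "(\<Sum>i<n. B $$ (Suc i,0) * cofactor B (Suc i) 0) = 0"
    by (rule sum.neutral) (auto simp: B_def Bm_def)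
  have "det B = B $$ (Suc n, 0) * cofactor B (Suc n) 0 + B $$ (0,0) * cofactor B 0 0"
    unfolding lap sum.lessThan_Suc[of _ "Suc n"] sum.lessThan_Suc_shift[of _ n] z by simp
  moreover have "B $$ (Suc n, 0) = a 0" by (simp add: B_def Bm_def)
  moreover have "B $$ (0, 0) = d" by (simp add: B_def Bm_def)
  moreover have "mat_delete B 0 0 = Bm (Suc n) d e (\<lambda>j. a (Suc j))"
    by (rule eq_matI) (auto simp: B_def Bm_def mat_delete_def)
  moreover have "det (mat_delete B (Suc n) 0) = e^(Suc n)"
  proof -
    have c: "mat_delete B (Suc n) 0 \<in> carrier_mat (Suc n) (Suc n)"
      using mat_delete_carrier[OF Bc] by simp
    have "det (mat_delete B (Suc n) 0) = prod_list (diag_mat (mat_delete B (Suc n) 0))"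
      by (rule det_lower_triangular[OF _ c]) (auto simp: B_def Bm_def mat_delete_def)
    also have "\<dots> = (\<Prod>i = 0..<Suc n. e)"
      unfolding prod_list_diag_prod using c
      by (intro prod.cong refl) (auto simp: B_def Bm_def mat_delete_def)
    finally show ?thesis by simp
  qed
  ultimately have "det B = a 0 * ((-1)^(Suc n) * e^(Suc n)) + d * det (Bm (Suc n) d e (\<lambda>j. a (Suc j)))"
    unfolding cofactor_def by simp
  also have "\<dots> = (\<Sum>j\<le>Suc n. a j * (-1)^(Suc n+j) * d^j * e^(Suc n-j))"
  proof -
    have sh: "(\<Sum>j\<le>Suc n. a j * (-1)^(Suc n+j) * d^j * e^(Suc n-j)) =
      a 0 * (-1)^(Suc n) * e^(Suc n) + (\<Sum>j\<le>n. a (Suc j) * (-1)^(Suc n+Suc j) * d^(Suc j) * e^(Suc n-Suc j))"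
      by (subst sum.atMost_Suc_shift) simp
    have "(\<Sum>j\<le>n. a (Suc j) * (-1)^(Suc n+Suc j) * d^(Suc j) * e^(Suc n-Suc j))
       = d * (\<Sum>j\<le>n. a (Suc j) * (-1)^(n+j) * d^j * e^(n-j))"
      unfolding sum_distrib_left by (intro sum.cong refl) (simp add: algebra_simps)
    then show ?thesis unfolding sh Suc.IH by (simp add: algebra_simps)
  qed
  finally show ?case unfolding B_def .
qed



lemma lin:
  assumes "A1 + V = R1" "A2 + V*c + W = R2" "R2 + R1 = (P::'a::comm_ring_1)"
  shows "A1 + A2 = P - V - V*c - W"
  unfolding assms(3)[symmetric] assms(1)[symmetric] assms(2)[symmetric] by (simp add: algebra_simps)

lemma comb:
  fixes x y :: "'a::field"
  defines "u \<equiv> (1+x)*(1+y)" and "p \<equiv> x*y"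
  shows "(-1)^(Suc m) * (\<Sum>j<m. (-u)^j * (fps_nth (Cf x y j) (m-j) + fps_nth (Cf x y j) (Suc m-j)))
     + (p - of_nat m * (x+y)) * u^m = p^(Suc m)"
proof -
  let ?Q = "\<lambda>j k. fps_nth (Cf x y j) (k-j)"
  have F1: "(\<Sum>j\<le>m. (-u)^j * ?Q j m) = fps_nth (Rf x y) m" unfolding u_def by (rule F_eq)
  have F2: "(\<Sum>j\<le>Suc m. (-u)^j * ?Q j (Suc m)) = fps_nth (Rf x y) (Suc m)" unfolding u_def by (rule F_eq)
  have R: "fps_nth (Rf x y) (Suc m) + fps_nth (Rf x y) m = (-p)^(Suc m)" unfolding p_def by (rule R_rec)
  have s1: "(\<Sum>j\<le>m. (-u)^j * ?Q j m) = (\<Sum>j<m. (-u)^j * ?Q j m) + (-u)^m"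
    by (simp add: lessThan_Suc_atMost[symmetric] Cf_nth0)
  have s2: "(\<Sum>j\<le>Suc m. (-u)^j * ?Q j (Suc m)) = (\<Sum>j<m. (-u)^j * ?Q j (Suc m)) + (-u)^m * (of_nat (Suc m) * (x+y)) + (-u)^(Suc m)"
    by (simp add: lessThan_Suc_atMost[symmetric] Cf_nth0 Cf_nth1 Suc_diff_le)
  have T: "(\<Sum>j<m. (-u)^j * (?Q j m + ?Q j (Suc m))) = (-p)^(Suc m) - (-u)^m - (-u)^m * (of_nat (Suc m) * (x+y)) - (-u)^(Suc m)"
  proof -
    have e1: "(\<Sum>j<m. (-u)^j * ?Q j m) + (-u)^m = fps_nth (Rf x y) m" using F1 s1 by simp
    have e2: "(\<Sum>j<m. (-u)^j * ?Q j (Suc m)) + (-u)^m * (of_nat (Suc m) * (x+y)) + (-u)^(Suc m) = fps_nth (Rf x y) (Suc m)"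
      using F2 unfolding s2 .
    have "(\<Sum>j<m. (-u)^j * (?Q j m + ?Q j (Suc m))) = (\<Sum>j<m. (-u)^j * ?Q j m) + (\<Sum>j<m. (-u)^j * ?Q j (Suc m))"
      by (simp only: distrib_left sum.distrib)
    then show ?thesis using lin[OF e1 e2 R] by simp
  qed
  have alg: "\<And>s U P' c. s*s = 1 \<Longrightarrow> (-s) * ((-s*p*P') - s*U - s*U * ((1+c) * (x+y)) - (-s*u*U)) + (p - c*(x+y))*U
       = p*P' + U * (1 + x + y + p - u)"
  proof -
    fix s U P' c assume ss: "s*s = (1::'a)"
    have "(-s) * ((-s*p*P') - s*U - s*U * ((1+c) * (x+y)) - (-s*u*U)) + (p - c*(x+y))*U
      = (s*s)*(p*P' + U + U*((1+c)*(x+y)) - u*U) + (p - c*(x+y))*U" by (simp add: algebra_simps)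
    then show "(-s) * ((-s*p*P') - s*U - s*U * ((1+c) * (x+y)) - (-s*u*U)) + (p - c*(x+y))*U
       = p*P' + U * (1 + x + y + p - u)" unfolding ss by (simp add: algebra_simps)
  qed
  have sq: "(-1::'a)^m * (-1)^m = 1" by (simp flip: power_mult_distrib)
  have "(-1)^(Suc m) * ((-p)^(Suc m) - (-u)^m - (-u)^m * (of_nat (Suc m) * (x+y)) - (-u)^(Suc m))
     + (p - of_nat m * (x+y)) * u^m = p^(Suc m) + u^m * (1 + x + y + p - u)"
  proof -
    have "(-1)^(Suc m) * ((-p)^(Suc m) - (-u)^m - (-u)^m * (of_nat (Suc m) * (x+y)) - (-u)^(Suc m))
     + (p - of_nat m * (x+y)) * u^m = (-((-1)^m)) * ((-((-1)^m)*p*p^m) - (-1)^m*u^m - (-1)^m*u^m * ((1+of_nat m) * (x+y)) - (-((-1)^m)*u*u^m)) + (p - of_nat m*(x+y))*u^m"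
      by (simp only: power_Suc power_minus[of p] power_minus[of u] of_nat_Suc) (simp add: algebra_simps)
    also have "\<dots> = p*p^m + u^m * (1 + x + y + p - u)" by (rule alg[OF sq])
    finally show ?thesis by simp
  qed
  also have "1 + x + y + p - u = 0" unfolding u_def p_def by (simp add: algebra_simps)
  finally show ?thesis unfolding T by simp
qed

lemma term_alg:
  fixes p u S :: "'a::field"
  assumes p: "p \<noteq> 0" and j: "j < m"
  shows "((-1)^(Suc m + j) / p * S) * (-1)^(m+j) * (u/p)^j * (-1/p)^(m-j)
     = (-1)^(Suc m) * (-u)^j * S / p^(Suc m)"
proof -
  obtain k where m: "m = j + k" using j by (metis less_imp_add_positive)
  have s: "(-1::'a)^(Suc m + j) * (-1)^(m+j) * (-1)^k = (-1)^(Suc m) * (-1)^j"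
    unfolding m by (cases "even j"; cases "even k") (simp_all add: power_add)
  have pp: "p^(Suc m) = p * p^j * p^k" unfolding m by (simp add: power_add)
  have "((-1)^(Suc m + j) / p * S) * (-1)^(m+j) * (u/p)^j * (-1/p)^(m-j)
     = ((-1::'a)^(Suc m + j) * (-1)^(m+j) * (-1)^k) * u^j * S / (p * p^j * p^k)"
    unfolding m by (simp add: power_divide power_minus[of "1/p"] field_simps)
  also have "\<dots> = (-1)^(Suc m) * (-u)^j * S / p^(Suc m)"
    unfolding s pp by (simp add: power_minus[of u])
  finally show ?thesis .
qed

lemma entry_top:
  fixes x y :: "'a::field"
  assumes "i < m"
  shows "A_entry (Suc m) x y i j = (if j = i then (1 + x) * (1 + y) / (x * y) else if j = i+1 then - 1 / (x * y) else 0)"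
  using assms unfolding A_entry_def by auto

lemma entry_bot:
  fixes x y :: "'a::field"
  assumes "j < m"
  shows "A_entry (Suc m) x y m j = (-1) ^ (Suc m + j) / (x * y) * Ssum (Suc m) x y j"
  using assms unfolding A_entry_def Ssum_def by simp

lemma entry_last:
  fixes x y :: "'a::field"
  shows "A_entry (Suc m) x y m m = (x * y - of_nat m * (x + y)) / (x * y)"
  unfolding A_entry_def by simp

theorem lemma6:
  fixes x y :: "'a::field"
  assumes "x \<noteq> 0" and "y \<noteq> 0" and "n \<ge> 1"
  shows "det (A_mat n x y) = 1"
proof -
  obtain m where n: "n = Suc m" using assms(3) by (cases n) auto
  define u where "u = (1+x)*(1+y)"
  define p where "p = x*y"
  have p0: "p \<noteq> 0" using assms unfolding p_def by simp
  define a where "a = (\<lambda>j. A_entry n x y m j)"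
  have Aeq: "A_mat n x y = Bm n (u/p) (-1/p) a"
  proof (rule eq_matI)
    fix i j assume i: "i < dim_row (Bm n (u/p) (-1/p) a)" and j: "j < dim_col (Bm n (u/p) (-1/p) a)"
    show "A_mat n x y $$ (i,j) = Bm n (u/p) (-1/p) a $$ (i,j)"
    proof (cases "i < m")
      case True then show ?thesis using i j unfolding A_mat_def Bm_def n
        by (simp add: entry_top u_def p_def)
    next
      case False then have "i = m" using i by (simp add: Bm_def n)
      then show ?thesis using i j unfolding A_mat_def Bm_def n a_def by simp
    qed
  qed (simp_all add: A_mat_def Bm_def)
  let ?Q = "\<lambda>j k. fps_nth (Cf x y j) (k-j)"
  have "det (A_mat n x y) = (\<Sum>j\<le>m. a j * (-1)^(m+j) * (u/p)^j * (-1/p)^(m-j))"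
    unfolding Aeq unfolding n by (rule det_Bm)
  also have "\<dots> = (\<Sum>j<m. a j * (-1)^(m+j) * (u/p)^j * (-1/p)^(m-j)) + a m * (-1)^(m+m) * (u/p)^m"
    by (simp add: lessThan_Suc_atMost[symmetric])
  also have "(\<Sum>j<m. a j * (-1)^(m+j) * (u/p)^j * (-1/p)^(m-j)) =
      (\<Sum>j<m. (-1)^(Suc m) * (-u)^j * (?Q j m + ?Q j (Suc m)) / p^(Suc m))"
  proof (intro sum.cong refl)
    fix j assume "j \<in> {..<m}"
    then have j: "j < m" by simp
    have "a j = (-1) ^ (Suc m + j) / p * (?Q j m + ?Q j (Suc m))"
      unfolding a_def n entry_bot[OF j] Ssum_eq[OF less_imp_le[OF j]] p_def ..
    then show "a j * (-1)^(m+j) * (u/p)^j * (-1/p)^(m-j) = (-1)^(Suc m) * (-u)^j * (?Q j m + ?Q j (Suc m)) / p^(Suc m)"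
      using term_alg[OF p0 j] by simp
  qed
  also have "a m * (-1)^(m+m) * (u/p)^m = (p - of_nat m * (x+y)) * u^m / p^(Suc m)"
  proof -
    have "a m = (p - of_nat m * (x+y)) / p" unfolding a_def n entry_last p_def ..
    moreover have "(-1::'a)^(m+m) = 1" by (simp flip: mult_2)
    ultimately show ?thesis by (simp add: power_divide)
  qed
  also have "(\<Sum>j<m. (-1)^(Suc m) * (-u)^j * (?Q j m + ?Q j (Suc m)) / p^(Suc m)) + (p - of_nat m * (x+y)) * u^m / p^(Suc m)
     = ((-1)^(Suc m) * (\<Sum>j<m. (-u)^j * (?Q j m + ?Q j (Suc m))) + (p - of_nat m * (x+y)) * u^m) / p^(Suc m)"
    by (simp add: sum_divide_distrib sum_distrib_left add_divide_distrib mult.assoc)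
  also have "\<dots> = p^(Suc m) / p^(Suc m)"
    unfolding u_def p_def comb ..
  also have "\<dots> = 1" using p0 by simp
  finally show ?thesis .
qed

end
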